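(* Every finite nonempty left-cancellative semigroup (i.e. $ax=ay$ implies $x=y$) is $K$-thin.
   Context: For a finite nonempty semigroup $S$, the minimal ideal $K(S)$ is the intersection of all nonempty two-sided ideals of $S$. A Rees matrix semigroup $\mathcal{M}(H;I,J;p)$, for sets $I,J$, a group $H$ and a function $p\colon J\times I\to H$, is the set $I\times H\times J$ with product $(i,h,j)(i',h',j')=(i,h\,p(j,i')\,h',j')$. It is known that $K(S)$ is always isomorphic to such a Rees matrix semigroup with $H$ a finite group and $p$ normalized (i.e. $p(j_0,i)=e_H$ and $p(j,i_0)=e_H$ for some fixed $i_0\in I$, $j_0\in J$ and all $i,j$). $S$ is called $K$-thin if $K(S)$ has such a normalized Rees matrix structure with $|I|=1$ or $|J|=1$; equivalently, $K(S)$ is left-simple or right-simple. *)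

theory Defs
  imports "HOL-Algebra.Group"
begin

definition sg_ideal :: "'a::semigroup_mult set \<Rightarrow> bool" where
  "sg_ideal A \<longleftrightarrow> A \<noteq> {} \<and> (\<forall>a\<in>A. \<forall>s. s * a \<in> A \<and> a * s \<in> A)"

definition minimal_ideal :: "'a::semigroup_mult set" where
  "minimal_ideal = \<Inter> {A. sg_ideal A}"

definition rees_carrier :: "'i set \<Rightarrow> ('g,'m) monoid_scheme \<Rightarrow> 'j set \<Rightarrow> ('i \<times> 'g \<times> 'j) set" where
  "rees_carrier I H J = I \<times> carrier H \<times> J"

definition rees_mult :: "('g,'m) monoid_scheme \<Rightarrow> ('j \<Rightarrow> 'i \<Rightarrow> 'g)
    \<Rightarrow> ('i \<times> 'g \<times> 'j) \<Rightarrow> ('i \<times> 'g \<times> 'j) \<Rightarrow> ('i \<times> 'g \<times> 'j)" where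
  "rees_mult H p x y =
     (case x of (i, h, j) \<Rightarrow> case y of (i', h', j') \<Rightarrow> (i, h \<otimes>\<^bsub>H\<^esub> p j i' \<otimes>\<^bsub>H\<^esub> h', j'))"

definition normalized_sandwich :: "'i set \<Rightarrow> ('g,'m) monoid_scheme \<Rightarrow> 'j set \<Rightarrow> ('j \<Rightarrow> 'i \<Rightarrow> 'g) \<Rightarrow> bool" where
  "normalized_sandwich I H J p \<longleftrightarrow>
     (\<forall>j\<in>J. \<forall>i\<in>I. p j i \<in> carrier H) \<and>
     (\<exists>i0\<in>I. \<exists>j0\<in>J. (\<forall>i\<in>I. p j0 i = \<one>\<^bsub>H\<^esub>) \<and> (\<forall>j\<in>J. p j i0 = \<one>\<^bsub>H\<^esub>))"

definition rees_iso :: "'a::semigroup_mult set \<Rightarrow> ('a \<Rightarrow> 'i \<times> 'g \<times> 'j) \<Rightarrow> 'i set \<Rightarrow> ('g,'m) monoid_scheme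
    \<Rightarrow> 'j set \<Rightarrow> ('j \<Rightarrow> 'i \<Rightarrow> 'g) \<Rightarrow> bool" where
  "rees_iso K f I H J p \<longleftrightarrow>
     bij_betw f K (rees_carrier I H J) \<and>
     (\<forall>x\<in>K. \<forall>y\<in>K. f (x * y) = rees_mult H p (f x) (f y))"

text \<open>S is K-thin if K(S) has a normalized Rees matrix structure over a finite group
with |I| = 1 or |J| = 1.  Since S is finite, the index sets and the group can be taken
with elements in nat without loss of generality.\<close>

definition K_thin :: "'a::semigroup_mult itself \<Rightarrow> bool" where
  "K_thin _ \<longleftrightarrow>
     (\<exists>(I::nat set) (J::nat set) (H::nat monoid) (p::nat \<Rightarrow> nat \<Rightarrow> nat) (f::'a \<Rightarrow> nat \<times> nat \<times> nat).
        group H \<and> finite (carrier H) \<and> normalized_sandwich I H J p \<and>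
        rees_iso (minimal_ideal :: 'a set) f I H J p \<and>
        (card I = 1 \<or> card J = 1))"

end

theory Submission
  imports Defs
begin

theorem proposition7p10:
  assumes left_cancel: "\<And>a x y :: 'a::{finite, semigroup_mult}. a * x = a * y \<Longrightarrow> x = y"
  shows "K_thin TYPE('a)"
proof -
  have sol: "\<exists>x. a * x = b" for a b :: 'a
  proof -
    have "inj (\<lambda>x. a * x)" by (auto intro: injI left_cancel)
    then have "surj (\<lambda>x::'a. a * x)" using finite_UNIV_inj_surj finite_UNIV by blast
    then show ?thesis by (metis surjD)
  qed
  have idl: "e * x = x" if "e * e = e" for e x :: 'a
    using left_cancel[of e "e * x" x] that by (simp add: mult.assoc[symmetric])
  obtain e0 :: 'a where e0: "e0 * e0 = e0"
  proof -
    fix a :: 'a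
    obtain e where ae: "a * e = a" using sol by blast
    then have "a * (e * e) = a * e" by (simp add: mult.assoc[symmetric])
    then show thesis using left_cancel that by blast
  qed
  have idem_ex: "s * (SOME e. s * e = s) = s" for s :: 'a
    using sol by (metis (mono_tags) someI_ex)
  define idp where "idp s = (SOME e. s * e = s)" for s :: 'a
  have idp: "s * idp s = s" for s using idem_ex idp_def by simp
  have idp_idem: "idp s * idp s = idp s" for s
  proof -
    have "s * (idp s * idp s) = s * idp s" using idp by (metis mult.assoc)
    then show ?thesis using left_cancel by blast
  qed
  have idp_uniq: "idp s = e" if "s * e = s" for s e
    using left_cancel[of s "idp s" e] idp that by simp
  have minK: "minimal_ideal = (UNIV :: 'a set)"
  proof -
    have "A = UNIV" if "sg_ideal A" for A :: "'a set"
    proof -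
      from that obtain a where a: "a \<in> A" and cl: "\<forall>a\<in>A. \<forall>s. a * s \<in> A"
        unfolding sg_ideal_def by blast
      have "b \<in> A" for b
      proof -
        obtain x where "a * x = b" using sol by blast
        then show "b \<in> A" using a cl by blast
      qed
      then show ?thesis by blast
    qed
    then show ?thesis unfolding minimal_ideal_def
      by (auto simp: sg_ideal_def)
  qed
  obtain enc :: "'a \<Rightarrow> nat" where enc: "inj enc"
    using finite_imp_inj_to_nat_seg[OF finite_UNIV] by blast
  define dec where "dec = inv_into UNIV enc"
  have dec[simp]: "dec (enc x) = x" for x using enc dec_def by simp
  define G where "G = {x :: 'a. x * e0 = x}"
  define E where "E = {x :: 'a. x * x = x}"
  define H :: "nat monoid" where "H = \<lparr>carrier = enc ` G, monoid.mult = (\<lambda>x y. enc (dec x * dec y)), one = enc e0\<rparr>"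
  define I where "I = {0::nat}"
  define J where "J = enc ` E"
  define p where "p = (\<lambda>(j::nat) (i::nat). enc e0)"
  define f where "f = (\<lambda>s. (0::nat, enc (s * e0), enc (idp s)))"
  have e0G: "e0 \<in> G" using e0 G_def by simp
  have Gmul: "x * y \<in> G" if "y \<in> G" for x y using that G_def by (simp add: mult.assoc)
  have grp: "group H"
  proof (rule groupI)
    show "\<one>\<^bsub>H\<^esub> \<in> carrier H" using e0G H_def by simp
  next
    fix x y assume "x \<in> carrier H" "y \<in> carrier H"
    then show "x \<otimes>\<^bsub>H\<^esub> y \<in> carrier H" using Gmul H_def by auto
  next
    fix x y z assume "x \<in> carrier H" "y \<in> carrier H" "z \<in> carrier H"
    then show "x \<otimes>\<^bsub>H\<^esub> y \<otimes>\<^bsub>H\<^esub> z = x \<otimes>\<^bsub>H\<^esub> (y \<otimes>\<^bsub>H\<^esub> z)"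
      using H_def by (simp add: mult.assoc)
  next
    fix x assume "x \<in> carrier H"
    then show "\<one>\<^bsub>H\<^esub> \<otimes>\<^bsub>H\<^esub> x = x" using H_def idl[OF e0] by auto
  next
    fix x assume "x \<in> carrier H"
    then obtain g where g: "g \<in> G" and x: "x = enc g" using H_def by auto
    obtain y where y: "g * y = e0" using sol by blast
    have "g * (y * g) = g * e0"
      using y g G_def idl[OF e0] by (simp add: mult.assoc[symmetric])
    then have yg: "y * g = e0" using left_cancel by blast
    have "(y * e0) * g = e0" using yg idl[OF e0] by (simp add: mult.assoc)
    moreover have "y * e0 \<in> G" using Gmul e0G by blast
    ultimately show "\<exists>y\<in>carrier H. y \<otimes>\<^bsub>H\<^esub> x = \<one>\<^bsub>H\<^esub>"
      using H_def x by (intro bexI[of _ "enc (y * e0)"]) auto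
  qed
  have fin: "finite (carrier H)" using H_def by simp
  have ns: "normalized_sandwich I H J p"
    unfolding normalized_sandwich_def
  proof (intro conjI)
    show "\<forall>j\<in>J. \<forall>i\<in>I. p j i \<in> carrier H" using p_def H_def e0G by simp
    have "enc e0 \<in> J" using J_def E_def e0 by simp
    then show "\<exists>i0\<in>I. \<exists>j0\<in>J. (\<forall>i\<in>I. p j0 i = \<one>\<^bsub>H\<^esub>) \<and> (\<forall>j\<in>J. p j i0 = \<one>\<^bsub>H\<^esub>)"
      using I_def p_def H_def by auto
  qed
  have hom: "f (x * y) = rees_mult H p (f x) (f y)" for x y
  proof -
    have "idp (x * y) = idp y" using idp by (intro idp_uniq) (simp add: mult.assoc)
    moreover have "(x * e0) * e0 * (y * e0) = x * y * e0"
      using e0 idl[OF e0] by (simp add: mult.assoc)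
    ultimately show ?thesis by (simp add: f_def H_def p_def rees_mult_def)
  qed
  have bij: "bij_betw f UNIV (rees_carrier I H J)"
    unfolding bij_betw_def
  proof
    show "inj f"
    proof (rule injI)
      fix s t assume "f s = f t"
      then have a: "s * e0 = t * e0" and b: "idp s = idp t"
        using f_def enc by (auto dest: injD)
      have "s = s * (e0 * idp s)" using idl[OF e0] idp by simp
      also have "\<dots> = s * e0 * idp s" by (simp add: mult.assoc)
      also have "\<dots> = t * e0 * idp t" using a b by simp
      also have "\<dots> = t * (e0 * idp t)" by (simp add: mult.assoc)
      also have "\<dots> = t" using idl[OF e0] idp by simp
      finally show "s = t" .
    qed
  next
    show "range f = rees_carrier I H J"
    proof
      show "range f \<subseteq> rees_carrier I H J"
      proof
        fix z assume "z \<in> range f"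
        then obtain s where z: "z = f s" by blast
        have "s * e0 \<in> G" using Gmul e0G by blast
        moreover have "idp s \<in> E" using idp_idem E_def by simp
        ultimately show "z \<in> rees_carrier I H J"
          unfolding z f_def rees_carrier_def I_def H_def J_def by simp
      qed
    next
      show "rees_carrier I H J \<subseteq> range f"
      proof
        fix z assume "z \<in> rees_carrier I H J"
        then obtain g e where g: "g \<in> G" and e: "e \<in> E" and z: "z = (0, enc g, enc e)"
          unfolding rees_carrier_def I_def H_def J_def by auto
        have "(g * e) * e0 = g" using g e G_def E_def idl by (simp add: mult.assoc)
        moreover have "idp (g * e) = e" using e E_def by (intro idp_uniq) (simp add: mult.assoc)
        ultimately have "f (g * e) = z" using f_def z by simp
        then show "z \<in> range f" by blast
      qed
    qed
  qed
  have "rees_iso (minimal_ideal :: 'a set) f I H J p"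
    unfolding rees_iso_def minK using bij hom by simp
  moreover have "card I = 1" using I_def by simp
  ultimately show ?thesis unfolding K_thin_def using grp fin ns by blast
qed

end
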